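(* Let $1\le b<\frac{n}{2}-1$, and let $T$ be a tree attaining the maximum value of $M_1$ over $\mathcal{CT}^*_{n,b}$, or a tree attaining the maximum value of $M_2$ over $\mathcal{CT}^*_{n,b}$. Then: (a) if $n_2>0$ then $n_1=2b+2$, $n_2=n-3b-2$, $n_3=0$ and $n_4=b$; (b) $n_2=0$ if and only if $n_1=n-b$, $n_3=3b-n+2$ and $n_4=n-2b-2$.
   Context: A chemical tree is a tree with maximum degree at most $4$. A branching vertex is a vertex of degree greater than $2$. $\mathcal{CT}^*_{n,b}$ is the class of all $n$-vertex chemical trees with exactly $b$ branching vertices. $n_i$ denotes the number of vertices of degree $i$ in $T$. $M_1(G)=\sum_v d_v^2$ and $M_2(G)=\sum_{uv\in E(G)}d_ud_v$, where $d_v$ is the degree of $v$. *)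

theory Defs
  imports Complex_Main
begin

text \<open>A graph on the vertex set {0..<n} is given by its edge set E, a set of
  2-element subsets of {0..<n}. Every n-vertex tree is isomorphic to one of these.\<close>

definition is_graph :: "nat \<Rightarrow> nat set set \<Rightarrow> bool" where
  "is_graph n E \<longleftrightarrow> (\<forall>e\<in>E. \<exists>u v. e = {u, v} \<and> u \<noteq> v \<and> u < n \<and> v < n)"

definition adj :: "nat set set \<Rightarrow> (nat \<times> nat) set" where
  "adj E = {(u, v). {u, v} \<in> E}"

definition connected_graph :: "nat \<Rightarrow> nat set set \<Rightarrow> bool" where
  "connected_graph n E \<longleftrightarrow> (\<forall>u<n. \<forall>v<n. (u, v) \<in> (adj E)\<^sup>*)"

definition is_tree :: "nat \<Rightarrow> nat set set \<Rightarrow> bool" where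
  "is_tree n E \<longleftrightarrow> n \<ge> 1 \<and> is_graph n E \<and> connected_graph n E \<and> card E = n - 1"

definition deg :: "nat set set \<Rightarrow> nat \<Rightarrow> nat" where
  "deg E v = card {e\<in>E. v \<in> e}"

definition chemical :: "nat \<Rightarrow> nat set set \<Rightarrow> bool" where
  "chemical n E \<longleftrightarrow> (\<forall>v<n. deg E v \<le> 4)"

definition num_deg :: "nat \<Rightarrow> nat set set \<Rightarrow> nat \<Rightarrow> nat" where
  "num_deg n E i = card {v. v < n \<and> deg E v = i}"

definition num_branching :: "nat \<Rightarrow> nat set set \<Rightarrow> nat" where
  "num_branching n E = card {v. v < n \<and> deg E v > 2}"

definition CT :: "nat \<Rightarrow> nat \<Rightarrow> nat set set set" where
  "CT n b = {E. is_tree n E \<and> chemical n E \<and> num_branching n E = b}"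

definition M1 :: "nat \<Rightarrow> nat set set \<Rightarrow> nat" where
  "M1 n E = (\<Sum>v<n. (deg E v)^2)"

definition M2 :: "nat set set \<Rightarrow> nat" where
  "M2 E = (\<Sum>e\<in>E. \<Prod>v\<in>e. deg E v)"

end

theory Submission
  imports Defs
begin


abbreviation R :: "nat set set \<Rightarrow> (nat \<times> nat) set" where "R F \<equiv> (adj F)\<^sup>*"

lemma adj_iff[simp]: "(u,v) \<in> adj F \<longleftrightarrow> {u,v} \<in> F"
  by (simp add: adj_def)

lemma adj_sym: "(u,v) \<in> adj F \<Longrightarrow> (v,u) \<in> adj F"
  by (simp add: insert_commute)

lemma reach_sym: "(u,v) \<in> R F \<Longrightarrow> (v,u) \<in> R F"
proof (induction rule: rtrancl_induct)
  case base then show ?case by simp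
next
  case (step y z)
  then have "(z,y) \<in> adj F" using adj_sym by blast
  then show ?case using step(3) by (meson converse_rtrancl_into_rtrancl)
qed

lemma reach_mono: "F \<subseteq> G \<Longrightarrow> (u,v) \<in> R F \<Longrightarrow> (u,v) \<in> R G"
proof -
  assume "F \<subseteq> G" "(u,v) \<in> R F"
  moreover have "adj F \<subseteq> adj G" using \<open>F \<subseteq> G\<close> by (auto simp: adj_def)
  ultimately show ?thesis using rtrancl_mono by blast
qed

lemma reach_split:
  assumes "(u,v) \<in> R (insert {a,b} F)"
  shows "(u,v) \<in> R F \<or> ((u,a) \<in> R F \<and> (b,v) \<in> R F) \<or> ((u,b) \<in> R F \<and> (a,v) \<in> R F)"
  using assms
proof (induction rule: rtrancl_induct)
  case base then show ?case by simp
next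
  case (step y z)
  from step(2) have "{y,z} \<in> F \<or> {y,z} = {a,b}" by auto
  then show ?case
  proof
    assume "{y,z} \<in> F"
    then have yz: "(y,z) \<in> adj F" by simp
    then show ?thesis using step(3) by (meson rtrancl_into_rtrancl)
  next
    assume "{y,z} = {a,b}"
    then have "(y = a \<and> z = b) \<or> (y = b \<and> z = a)" by (auto simp: doubleton_eq_iff)
    then show ?thesis using step(3) reach_sym rtrancl_trans by (metis rtrancl.rtrancl_refl)
  qed
qed

lemma reroute:
  assumes "(a,b) \<in> R F" "(u,v) \<in> R (insert {a,b} F)"
  shows "(u,v) \<in> R F"
proof -
  have ba: "(b,a) \<in> R F" using assms(1) reach_sym by blast
  from reach_split[OF assms(2)] show ?thesis
  proof (elim disjE conjE)
    assume "(u,a) \<in> R F" "(b,v) \<in> R F"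
    then show ?thesis using assms(1) by (meson rtrancl_trans)
  next
    assume "(u,b) \<in> R F" "(a,v) \<in> R F"
    then show ?thesis using ba by (meson rtrancl_trans)
  qed
qed

lemma isolated:
  assumes "\<forall>e\<in>F. w \<notin> e" "(w,z) \<in> R F"
  shows "z = w"
  using assms(2)
proof (cases rule: converse_rtranclE)
  case base then show ?thesis by simp
next
  case (step m)
  then have "{w,m} \<in> F" by simp
  then show ?thesis using assms(1) by auto
qed

definition reps :: "nat \<Rightarrow> nat set set \<Rightarrow> nat set" where
  "reps n F = {u. u < n \<and> (\<forall>v. (v,u) \<in> R F \<longrightarrow> u \<le> v)}"

lemma reps_card:
  assumes "finite F" "\<forall>e\<in>F. \<exists>a b. e = {a,b}"
  shows "n \<le> card F + card (reps n F)"
  using assms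
proof (induction F rule: finite_induct)
  case empty
  have "reps n {} = {..<n}" by (auto simp: reps_def adj_def)
  then show ?case by simp
next
  case (insert e F)
  then obtain a b where e: "e = {a,b}" by auto
  define Bad where "Bad = reps n F - reps n (insert e F)"
  have bad: "u \<in> Bad \<Longrightarrow> u \<in> reps n F \<and> (((\<exists>v<u. (v,a) \<in> R F) \<and> (b,u) \<in> R F) \<or> ((\<exists>v<u. (v,b) \<in> R F) \<and> (a,u) \<in> R F))" for u
  proof -
    assume "u \<in> Bad"
    then have u1: "u \<in> reps n F" and "u \<notin> reps n (insert e F)" by (auto simp: Bad_def)
    then obtain v where v: "(v,u) \<in> R (insert {a,b} F)" "v < u" using e by (auto simp: reps_def)
    from reach_split[OF v(1)] u1 v(2) show ?thesis by (auto simp: reps_def)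
  qed
  have fB: "finite Bad" unfolding Bad_def reps_def by auto
  have cB: "card Bad \<le> Suc 0"
  proof (rule card_le_Suc0_iff_eq[OF fB, THEN iffD2])
    show "\<forall>x\<in>Bad. \<forall>y\<in>Bad. x = y"
    proof (intro ballI)
      fix x y assume x: "x \<in> Bad" and y: "y \<in> Bad"
      have bx: "((\<exists>v<x. (v,a) \<in> R F) \<and> (b,x) \<in> R F) \<or> ((\<exists>v<x. (v,b) \<in> R F) \<and> (a,x) \<in> R F)"
        using bad[OF x] by blast
      have byy: "((\<exists>v<y. (v,a) \<in> R F) \<and> (b,y) \<in> R F) \<or> ((\<exists>v<y. (v,b) \<in> R F) \<and> (a,y) \<in> R F)"
        using bad[OF y] by blast
      have rx: "\<And>z. (z,x) \<in> R F \<Longrightarrow> x \<le> z" using bad[OF x] by (auto simp: reps_def)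
      have ry: "\<And>z. (z,y) \<in> R F \<Longrightarrow> y \<le> z" using bad[OF y] by (auto simp: reps_def)
      have same: "x = y" if "(c,x) \<in> R F" "(c,y) \<in> R F" for c
      proof -
        have "(x,y) \<in> R F" using that reach_sym rtrancl_trans by metis
        moreover have "(y,x) \<in> R F" using that reach_sym rtrancl_trans by metis
        ultimately show ?thesis using rx ry by force
      qed
      have cross: False if "v1 < x" "(v1,c) \<in> R F" "(d,x) \<in> R F" "v2 < y" "(v2,d) \<in> R F" "(c,y) \<in> R F" for v1 v2 c d
      proof -
        have "(v2,x) \<in> R F" using that rtrancl_trans by metis
        moreover have "(v1,y) \<in> R F" using that rtrancl_trans by metis
        ultimately show False using rx ry that(1,4) by force
      qed
      show "x = y"
        using bx byy
      proof (elim disjE conjE exE)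
        fix v1 v2 assume "v1 < x" "(v1,a) \<in> R F" "(b,x) \<in> R F" "v2 < y" "(v2,b) \<in> R F" "(a,y) \<in> R F"
        then show ?thesis using cross by blast
      next
        fix v1 v2 assume "v1 < x" "(v1,b) \<in> R F" "(a,x) \<in> R F" "v2 < y" "(v2,a) \<in> R F" "(b,y) \<in> R F"
        then show ?thesis using cross by blast
      qed (use same in blast)+
    qed
  qed
  have a: "reps n F \<subseteq> reps n (insert e F) \<union> Bad" by (auto simp: Bad_def)
  have fR: "finite (reps n (insert e F))" unfolding reps_def by auto
  have "card (reps n F) \<le> card (reps n (insert e F)) + 1"
  proof -
    have "card (reps n F) \<le> card (reps n (insert e F) \<union> Bad)" using a fB fR by (intro card_mono) auto
    also have "\<dots> \<le> card (reps n (insert e F)) + card Bad" by (rule card_Un_le)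
    finally show ?thesis using cB by linarith
  qed
  then show ?case using insert by simp
qed



lemma graph_finite: "is_graph n E \<Longrightarrow> finite E"
proof -
  assume g: "is_graph n E"
  have "E \<subseteq> Pow {..<n}" using g unfolding is_graph_def by fastforce
  then show ?thesis by (meson finite_Pow_iff finite_lessThan finite_subset)
qed

lemma graph_pairs: "is_graph n E \<Longrightarrow> \<forall>e\<in>E. \<exists>a b. e = {a,b}"
  unfolding is_graph_def by blast

lemma graph_sub: "is_graph n E \<Longrightarrow> F \<subseteq> E \<Longrightarrow> is_graph n F"
  unfolding is_graph_def by blast

lemma conn_card:
  assumes "connected_graph n F" "n \<ge> 1" "finite F" "\<forall>e\<in>F. \<exists>a b. e = {a,b}"
  shows "n \<le> card F + 1"
proof -
  have "reps n F \<subseteq> {0}"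
  proof
    fix u assume u: "u \<in> reps n F"
    then have "u < n" by (simp add: reps_def)
    then have "(0,u) \<in> R F" using assms(1,2) unfolding connected_graph_def by auto
    then show "u \<in> {0}" using u by (auto simp: reps_def)
  qed
  then have "card (reps n F) \<le> 1" 
    using card_mono[of "{0::nat}"] by fastforce
  then show ?thesis using reps_card[OF assms(3,4), of n] by linarith
qed

lemma bridge:
  assumes t: "is_tree n E" and e: "{a,b} \<in> E"
  shows "(a,b) \<notin> R (E - {{a,b}})"
proof
  assume ab: "(a,b) \<in> R (E - {{a,b}})"
  let ?F = "E - {{a,b}}"
  have g: "is_graph n E" and c: "connected_graph n E" and cE: "card E = n - 1" and n1: "n \<ge> 1"
    using t by (auto simp: is_tree_def)
  have fE: "finite E" using graph_finite[OF g] .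
  have ins: "insert {a,b} ?F = E" using e by auto
  have "connected_graph n ?F"
    unfolding connected_graph_def
  proof (intro allI impI)
    fix u v assume "u < n" "v < n"
    then have "(u,v) \<in> R (insert {a,b} ?F)" using c ins by (simp add: connected_graph_def)
    then show "(u,v) \<in> R ?F" using reroute[OF ab] by blast
  qed
  moreover have "card ?F = n - 2" using cE e fE by simp
  moreover have "card E \<ge> 1" using e fE by (metis One_nat_def Suc_leI card_gt_0_iff empty_iff)
  moreover have "finite ?F" using fE by simp
  moreover have "\<forall>e\<in>?F. \<exists>a b. e = {a,b}" using graph_pairs[OF g] by blast
  ultimately have "n \<le> (n - 2) + 1" using conn_card[of n ?F] n1 by simp
  moreover have "n \<ge> 2" using cE \<open>card E \<ge> 1\<close> by linarith
  ultimately show False by linarith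
qed

lemma split_all:
  assumes c: "connected_graph n E" and e: "{a,b} \<in> E" and "a < n" "u < n"
  shows "(a,u) \<in> R (E - {{a,b}}) \<or> (b,u) \<in> R (E - {{a,b}})"
proof -
  have "(a,u) \<in> R (insert {a,b} (E - {{a,b}}))" using c e assms(3,4) unfolding connected_graph_def
    by (metis insert_Diff)
  from reach_split[OF this] show ?thesis by auto
qed



lemma deg_pos:
  assumes t: "is_tree n E" and "n \<ge> 2" "v < n"
  shows "deg E v \<ge> 1"
proof -
  have g: "is_graph n E" and c: "connected_graph n E" using t by (auto simp: is_tree_def)
  obtain u where u: "u < n" "u \<noteq> v" using assms(2,3)
    by (metis One_nat_def less_2_cases_iff less_le_trans not_less_eq_eq numeral_2_eq_2 zero_less_Suc)
  have "(v,u) \<in> R E" using c u assms(3) by (simp add: connected_graph_def)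
  then obtain m where "(v,m) \<in> adj E" using u(2) by (metis converse_rtranclE)
  then have "{v,m} \<in> {e\<in>E. v \<in> e}" by simp
  moreover have "finite {e\<in>E. v \<in> e}" using graph_finite[OF g] by simp
  ultimately show ?thesis unfolding deg_def by (metis One_nat_def Suc_leI card_gt_0_iff empty_iff)
qed

lemma edge_other:
  assumes g: "is_graph n E" and e: "e \<in> E" "w \<in> e"
  shows "\<exists>p. e = {w,p} \<and> p \<noteq> w"
proof -
  obtain a b where ab: "e = {a,b}" "a \<noteq> b" using e(1) g unfolding is_graph_def by blast
  show ?thesis
  proof (cases "w = a")
    case True
    then show ?thesis using ab by blast
  next
    case False
    then have "w = b" using ab e(2) by blast
    then show ?thesis using ab by (metis insert_commute)
  qed
qed

lemma deg2_edges:
  assumes g: "is_graph n E" and d: "deg E w = 2"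
  shows "\<exists>x y. x \<noteq> y \<and> x \<noteq> w \<and> y \<noteq> w \<and> {w,x} \<in> E \<and> {w,y} \<in> E \<and> {e\<in>E. w \<in> e} = {{w,x},{w,y}}"
proof -
  obtain e1 e2 where e: "{e\<in>E. w \<in> e} = {e1,e2}" "e1 \<noteq> e2"
    using d unfolding deg_def by (metis card_2_iff)
  have e1: "e1 \<in> E" "w \<in> e1" and e2: "e2 \<in> E" "w \<in> e2" using e(1) by blast+
  obtain x where x: "e1 = {w,x}" "x \<noteq> w" using edge_other[OF g e1] by blast
  obtain y where y: "e2 = {w,y}" "y \<noteq> w" using edge_other[OF g e2] by blast
  have "x \<noteq> y" using x y e(2) by auto
  then show ?thesis using x y e e1 e2 by blast
qed

lemma handshake:
  assumes g: "is_graph n E"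
  shows "(\<Sum>v<n. deg E v) = 2 * card E"
proof -
  have fE: "finite E" using graph_finite[OF g] .
  have "(\<Sum>v<n. deg E v) = (\<Sum>v<n. \<Sum>e\<in>E. if v \<in> e then 1 else 0)"
    unfolding deg_def using fE by (simp add: sum.If_cases Int_def conj_commute)
  also have "\<dots> = (\<Sum>e\<in>E. \<Sum>v<n. if v \<in> e then 1 else 0)" by (rule sum.swap)
  also have "\<dots> = (\<Sum>e\<in>E. 2)"
  proof (rule sum.cong[OF refl])
    fix e assume "e \<in> E"
    then obtain a b where ab: "e = {a,b}" "a \<noteq> b" "a < n" "b < n" using g unfolding is_graph_def by blast
    have "(\<Sum>v<n. if v \<in> e then 1 else 0) = card ({..<n} \<inter> {v. v \<in> e})"
      by (simp add: sum.If_cases)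
    also have "{..<n} \<inter> {v. v \<in> e} = {a,b}" using ab by auto
    finally show "(\<Sum>v<n. if v \<in> e then 1 else (0::nat)) = 2" using ab by simp
  qed
  finally show ?thesis by simp
qed

lemma counting:
  assumes "\<forall>v<n. 1 \<le> deg E v \<and> deg E v \<le> 4"
  shows "n = num_deg n E 1 + num_deg n E 2 + num_deg n E 3 + num_deg n E 4"
    and "(\<Sum>v<n. deg E v) = num_deg n E 1 + 2 * num_deg n E 2 + 3 * num_deg n E 3 + 4 * num_deg n E 4"
    and "num_branching n E = num_deg n E 3 + num_deg n E 4"
proof -
  have im: "deg E ` {..<n} \<subseteq> {1,2,3,4}" using assms by force
  have cnt: "num_deg n E i = card {v \<in> {..<n}. deg E v = i}" for i unfolding num_deg_def by simp
  have "(\<Sum>i\<in>{1,2,3,4}. \<Sum>v\<in>{v \<in> {..<n}. deg E v = i}. (1::nat)) = (\<Sum>v<n. 1)"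
    by (rule sum.group[OF finite_lessThan _ im]) simp
  then show "n = num_deg n E 1 + num_deg n E 2 + num_deg n E 3 + num_deg n E 4"
    by (simp add: cnt)
  have "(\<Sum>i\<in>{1,2,3,4}. \<Sum>v\<in>{v \<in> {..<n}. deg E v = i}. deg E v) = (\<Sum>v<n. deg E v)"
    by (rule sum.group[OF finite_lessThan _ im]) simp
  moreover have "(\<Sum>v\<in>{v \<in> {..<n}. deg E v = i}. deg E v) = i * num_deg n E i" for i
  proof -
    have "(\<Sum>v\<in>{v \<in> {..<n}. deg E v = i}. deg E v) = (\<Sum>v\<in>{v \<in> {..<n}. deg E v = i}. i)"
      by (rule sum.cong) auto
    then show ?thesis by (simp add: cnt)
  qed
  ultimately show "(\<Sum>v<n. deg E v) = num_deg n E 1 + 2 * num_deg n E 2 + 3 * num_deg n E 3 + 4 * num_deg n E 4"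
    by (simp only: sum.insert_remove finite.intros finite_insert) simp
  have "{v. v < n \<and> deg E v > 2} = {v. v < n \<and> deg E v = 3} \<union> {v. v < n \<and> deg E v = 4}"
    using assms by fastforce
  then show "num_branching n E = num_deg n E 3 + num_deg n E 4"
    unfolding num_branching_def num_deg_def by (simp add: card_Un_disjoint disjoint_iff)
qed



lemma edge_props:
  assumes g: "is_graph n E" and e: "{a,b} \<in> E"
  shows "a \<noteq> b" "a < n" "b < n"
proof -
  obtain u v where uv: "{a,b} = {u,v}" "u \<noteq> v" "u < n" "v < n" using g e unfolding is_graph_def by blast
  have ab: "(a = u \<and> b = v) \<or> (a = v \<and> b = u)" using uv(1) by (simp add: doubleton_eq_iff)
  then show "a \<noteq> b" "a < n" "b < n" using uv(2,3,4) by auto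
qed

lemma filt_ins: "{e \<in> insert f (E - {h}). u \<in> e} = (if u \<in> f then insert f ({e\<in>E. u \<in> e} - {h}) else {e\<in>E. u \<in> e} - {h})"
  by auto

lemma prod_pair: "a \<noteq> b \<Longrightarrow> (\<Prod>z\<in>{a,b}. f z) = f a * (f b :: nat)"
  by simp

lemma surgery:
  assumes t: "is_tree n E" and ch: "chemical n E"
    and dw: "deg E w = 2" and dv: "deg E v = 3"
    and ex: "{w,x} \<in> E" and ey: "{w,y} \<in> E" and xy: "x \<noteq> y" and vw: "v \<noteq> w" and vn: "v < n"
    and Ew: "{e\<in>E. w \<in> e} = {{w,x},{w,y}}"
    and r: "(w,v) \<in> R (E - {{w,y}})"
  shows "insert {v,y} (E - {{w,y}}) \<in> CT n (num_branching n E)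
       \<and> M1 n E < M1 n (insert {v,y} (E - {{w,y}})) \<and> M2 E < M2 (insert {v,y} (E - {{w,y}}))"
proof -
  define E' where "E' = insert {v,y} (E - {{w,y}})"
  have g: "is_graph n E" and c: "connected_graph n E" and cE: "card E = n - 1" and n1: "n \<ge> 1"
    using t by (auto simp: is_tree_def)
  have fE: "finite E" using graph_finite[OF g] .
  have fE': "finite E'" using fE by (simp add: E'_def)
  have pw: "w \<noteq> y" "w < n" "y < n" using edge_props[OF g ey] by auto
  have px: "w \<noteq> x" "x < n" using edge_props[OF g ex] by auto
  have nr: "(w,y) \<notin> R (E - {{w,y}})" using bridge[OF t ey] .
  have vy: "v \<noteq> y" using nr r by blast
  have nvy: "{v,y} \<notin> E"
  proof
    assume "{v,y} \<in> E"
    then have "{v,y} \<in> E - {{w,y}}" using vw vy by (auto simp: doubleton_eq_iff)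
    then have "(v,y) \<in> adj (E - {{w,y}})" by simp
    then have "(w,y) \<in> R (E - {{w,y}})" using r by (meson rtrancl_into_rtrancl)
    then show False using nr by blast
  qed
  have wxy: "{w,x} \<noteq> {w,y}" using xy by (auto simp: doubleton_eq_iff)
  have FE': "{e\<in>E'. u \<in> e} = (if u \<in> {v,y} then insert {v,y} ({e\<in>E. u \<in> e} - {{w,y}}) else {e\<in>E. u \<in> e} - {{w,y}})" for u
    unfolding E'_def by (rule filt_ins)
  have Dw: "deg E' w = 1"
  proof -
    have "w \<notin> {v,y}" using vw pw(1) by simp
    then have "{e\<in>E'. w \<in> e} = {{w,x},{w,y}} - {{w,y}}" using FE'[of w] Ew by simp
    also have "\<dots> = {{w,x}}" using wxy by blast
    finally show ?thesis by (simp add: deg_def)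
  qed
  have Dv: "deg E' v = 4"
  proof -
    have "{w,y} \<notin> {e\<in>E. v \<in> e}" using vw vy by simp
    then have "{e\<in>E. v \<in> e} - {{w,y}} = {e\<in>E. v \<in> e}" by simp
    then have "{e\<in>E'. v \<in> e} = insert {v,y} {e\<in>E. v \<in> e}" using FE'[of v] by simp
    moreover have "finite {e\<in>E. v \<in> e}" using fE by simp
    moreover have "{v,y} \<notin> {e\<in>E. v \<in> e}" using nvy by simp
    ultimately show ?thesis using dv by (simp add: deg_def)
  qed
  have Do: "deg E' u = deg E u" if "u \<noteq> v" "u \<noteq> w" for u
  proof (cases "u = y")
    case True
    define S where "S = {e\<in>E. u \<in> e}"
    have fS: "finite S" using fE by (simp add: S_def)
    have wyS: "{w,y} \<in> S" using True ey by (simp add: S_def)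
    have "{e\<in>E'. u \<in> e} = insert {v,y} (S - {{w,y}})" using FE'[of u] True by (simp add: S_def)
    moreover have "{v,y} \<notin> S - {{w,y}}" using nvy by (simp add: S_def)
    ultimately have "deg E' u = Suc (card (S - {{w,y}}))" using fS by (simp add: deg_def)
    also have "\<dots> = card S" using card_Suc_Diff1[OF fS wyS] .
    finally show ?thesis by (simp add: S_def deg_def)
  next
    case False
    have "{w,y} \<notin> {e\<in>E. u \<in> e}" using False that by simp
    then have "{e\<in>E'. u \<in> e} = {e\<in>E. u \<in> e}" using FE'[of u] False that by auto
    then show ?thesis by (simp add: deg_def)
  qed
  have dpos: "deg E p \<ge> 1" if "e \<in> E" "p \<in> e" for e p
  proof -
    have "e \<in> {e\<in>E. p \<in> e}" using that by simp
    moreover have "finite {e\<in>E. p \<in> e}" using fE by simp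
    ultimately show ?thesis unfolding deg_def by (metis One_nat_def Suc_leI card_gt_0_iff empty_iff)
  qed
  have gE': "is_graph n E'" using g vy vn pw unfolding E'_def is_graph_def by blast
  have wyE': "(w,y) \<in> R E'"
  proof -
    have "(w,v) \<in> R E'" using reach_mono[OF _ r, of E'] unfolding E'_def by blast
    moreover have "(v,y) \<in> adj E'" unfolding E'_def by simp
    ultimately show ?thesis by (meson rtrancl_into_rtrancl)
  qed
  have cE': "connected_graph n E'"
    unfolding connected_graph_def
  proof (intro allI impI)
    fix u u' assume "u < n" "u' < n"
    then have "(u,u') \<in> R E" using c by (simp add: connected_graph_def)
    then have "(u,u') \<in> R (insert {w,y} E')" using reach_mono[of E "insert {w,y} E'"] unfolding E'_def by blast
    then show "(u,u') \<in> R E'" using reroute[OF wyE'] by blast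
  qed
  have "card E \<ge> 1" using ey fE by (metis One_nat_def Suc_leI card_gt_0_iff empty_iff)
  then have ccE': "card E' = n - 1" using cE fE nvy ey unfolding E'_def by (simp add: card_Diff_singleton)
  have tE': "is_tree n E'" using n1 gE' cE' ccE' by (simp add: is_tree_def)
  have chE': "chemical n E'" unfolding chemical_def
  proof (intro allI impI)
    fix u assume "u < n"
    then show "deg E' u \<le> 4" using Dv Dw Do[of u] ch by (cases "u = v"; cases "u = w"; auto simp: chemical_def)
  qed
  have "{u. u < n \<and> deg E' u > 2} = {u. u < n \<and> deg E u > 2}"
  proof -
    have "deg E' u > 2 \<longleftrightarrow> deg E u > 2" for u
    proof -
      consider "u = v" | "u = w" | "u \<noteq> v" "u \<noteq> w" by blast
      then show ?thesis
      proof cases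
        case 1 then show ?thesis using Dv dv by simp
      next
        case 2 then show ?thesis using Dw dw by simp
      next
        case 3 then show ?thesis using Do by simp
      qed
    qed
    then show ?thesis by blast
  qed
  then have bE': "num_branching n E' = num_branching n E" by (simp add: num_branching_def)
  have CT: "E' \<in> CT n (num_branching n E)" using tE' chE' bE' by (simp add: CT_def)
  have M1: "M1 n E < M1 n E'"
  proof -
    have A: "(\<Sum>u\<in>A. f u) = f v + f w + (\<Sum>u\<in>A - {v} - {w}. f u)" if "v \<in> A" "w \<in> A" "finite A" for A and f :: "nat \<Rightarrow> nat"
      using that vw by (simp add: sum.remove[of A v] sum.remove[of "A - {v}" w])
    have vA: "v \<in> {..<n}" "w \<in> {..<n}" using vn pw by auto
    have "(\<Sum>u\<in>{..<n} - {v} - {w}. (deg E' u)^2) = (\<Sum>u\<in>{..<n} - {v} - {w}. (deg E u)^2)"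
      using Do by (intro sum.cong) auto
    then show ?thesis unfolding M1_def using A[OF vA, of "\<lambda>u. (deg E' u)^2"] A[OF vA, of "\<lambda>u. (deg E u)^2"] Dv Dw dv dw
      by simp
  qed
  define P where "P = (\<lambda>e. \<Prod>z\<in>e. deg E z)"
  define P' where "P' = (\<lambda>e. \<Prod>z\<in>e. deg E' z)"
  define A where "A = E - {{w,y}} - {{w,x}}"
  define Ev where "Ev = {e\<in>E. v \<in> e} - {{w,x}}"
  have fA: "finite A" using fE by (simp add: A_def)
  have EvA: "Ev \<subseteq> A" using vw vy unfolding Ev_def A_def by (auto simp: doubleton_eq_iff)
  have fEv: "finite Ev" using fE by (simp add: Ev_def)
  have Ev1: "P e + 1 \<le> P' e" if "e \<in> Ev" for e
  proof -
    have e: "e \<in> E" "v \<in> e" "e \<noteq> {w,x}" using that by (auto simp: Ev_def)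
    obtain a b where ab: "e = {a,b}" "a \<noteq> b" using e(1) g unfolding is_graph_def by blast
    obtain p where p: "e = {v,p}" "p \<noteq> v"
    proof (cases "v = a")
      case True
      then show ?thesis using that ab by blast
    next
      case False
      then have "v = b" using ab e(2) by blast
      then show ?thesis using that ab by (metis insert_commute)
    qed
    have "p \<noteq> w"
    proof
      assume "p = w"
      then have "e \<in> {e\<in>E. w \<in> e}" using e p by simp
      then show False using Ew e vw vy by auto
    qed
    then have "P' e = 4 * deg E p" "P e = 3 * deg E p" using p Do Dv dv by (auto simp: P_def P'_def)
    moreover have "deg E p \<ge> 1" using dpos[OF e(1)] p by simp
    ultimately show ?thesis by simp
  qed
  have Rst: "P e = P' e" if "e \<in> A - Ev" for e
  proof -
    have e: "e \<in> E" "v \<notin> e" "w \<notin> e" using that Ew by (auto simp: A_def Ev_def)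
    then show ?thesis unfolding P_def P'_def using Do by (intro prod.cong) (metis, metis)
  qed
  have sA: "(\<Sum>e\<in>A. P e) + card Ev \<le> (\<Sum>e\<in>A. P' e)"
  proof -
    have "(\<Sum>e\<in>A. P e) = (\<Sum>e\<in>Ev. P e) + (\<Sum>e\<in>A - Ev. P e)"
      using fA EvA by (metis add.commute sum.subset_diff)
    moreover have "(\<Sum>e\<in>A. P' e) = (\<Sum>e\<in>Ev. P' e) + (\<Sum>e\<in>A - Ev. P' e)"
      using fA EvA by (metis add.commute sum.subset_diff)
    moreover have "(\<Sum>e\<in>A - Ev. P e) = (\<Sum>e\<in>A - Ev. P' e)" using Rst by (rule sum.cong[OF refl])
    moreover have "(\<Sum>e\<in>Ev. P e + 1) \<le> (\<Sum>e\<in>Ev. P' e)" using Ev1 by (rule sum_mono)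
    moreover have "(\<Sum>e\<in>Ev. P e + 1) = (\<Sum>e\<in>Ev. P e) + card Ev" unfolding sum.distrib by simp
    ultimately show ?thesis by linarith
  qed
  have wx: "P {w,x} \<le> P' {w,x} + card Ev + 1"
  proof (cases "x = v")
    case True
    have "card Ev = 2" using True dv ex unfolding Ev_def deg_def by (simp add: card_Diff_singleton)
    moreover have "P {w,x} = 6" "P' {w,x} = 4" using True vw dw dv Dw Dv by (auto simp: P_def P'_def)
    ultimately show ?thesis by simp
  next
    case False
    have "{w,x} \<notin> {e\<in>E. v \<in> e}" using False vw by auto
    then have "card Ev = 3" using dv unfolding Ev_def deg_def by simp
    moreover have "P {w,x} = 2 * deg E x" "P' {w,x} = deg E' x" using False px dw Dw by (auto simp: P_def P'_def)
    moreover have "deg E' x = deg E x" using Do False px by simp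
    moreover have "deg E x \<le> 4" using ch px by (simp add: chemical_def)
    ultimately show ?thesis by simp
  qed
  have M2E: "M2 E = P {w,y} + P {w,x} + (\<Sum>e\<in>A. P e)"
    unfolding M2_def P_def[symmetric] A_def using fE ex ey wxy
    by (simp add: sum.remove[of E "{w,y}"] sum.remove[of "E - {{w,y}}" "{w,x}"])
  have M2E': "M2 E' = P' {v,y} + P' {w,x} + (\<Sum>e\<in>A. P' e)"
  proof -
    have "M2 E' = (\<Sum>e\<in>E'. P' e)" by (simp add: M2_def P'_def)
    also have "\<dots> = P' {v,y} + (\<Sum>e\<in>E - {{w,y}}. P' e)"
      unfolding E'_def using fE nvy by (simp add: sum.insert)
    also have "(\<Sum>e\<in>E - {{w,y}}. P' e) = P' {w,x} + (\<Sum>e\<in>A. P' e)"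
      unfolding A_def using fE ex wxy by (simp add: sum.remove[of "E - {{w,y}}" "{w,x}"])
    finally show ?thesis by simp
  qed
  have "P {w,y} = 2 * deg E y" using pw dw by (simp add: P_def)
  moreover have "P' {v,y} = 4 * deg E y" using vy Dv Do[of y] pw vy by (simp add: P'_def)
  moreover have "deg E y \<ge> 1" using dpos[OF ey] by simp
  ultimately have M2: "M2 E < M2 E'" using M2E M2E' sA wx by linarith
  show ?thesis unfolding E'_def[symmetric] using CT M1 M2 by (intro conjI)
qed



lemma no_2_and_3:
  assumes t: "is_tree n E" and ch: "chemical n E"
    and hmax: "(\<forall>E'\<in>CT n (num_branching n E). M1 n E' \<le> M1 n E) \<or> (\<forall>E'\<in>CT n (num_branching n E). M2 E' \<le> M2 E)"
    and w: "w < n" "deg E w = 2" and v: "v < n" "deg E v = 3"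
  shows False
proof -
  have g: "is_graph n E" and c: "connected_graph n E" using t by (auto simp: is_tree_def)
  have vw: "v \<noteq> w" using v w by auto
  obtain x y where xy: "x \<noteq> y" "x \<noteq> w" "y \<noteq> w" "{w,x} \<in> E" "{w,y} \<in> E" and Ew: "{e\<in>E. w \<in> e} = {{w,x},{w,y}}"
    using deg2_edges[OF g w(2)] by blast
  have contra: False if "\<exists>E'. E' \<in> CT n (num_branching n E) \<and> M1 n E < M1 n E' \<and> M2 E < M2 E'"
    using that hmax by (meson leD)
  show False
  proof (cases "(w,v) \<in> R (E - {{w,y}})")
    case True
    show False using contra surgery[OF t ch w(2) v(2) xy(4) xy(5) xy(1) vw v(1) Ew True] by blast
  next
    case False
    have "(w,v) \<in> R (E - {{w,y}}) \<or> (y,v) \<in> R (E - {{w,y}})" using split_all[OF c xy(5) w(1) v(1)] .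
    then have yv: "(y,v) \<in> R (E - {{w,y}})" using False by blast
    define G where "G = E - {{w,y}} - {{w,x}}"
    have iso: "\<forall>e\<in>G. w \<notin> e" using Ew unfolding G_def by blast
    have ins: "insert {w,x} G = E - {{w,y}}" using xy unfolding G_def by (auto simp: doubleton_eq_iff)
    have "(y,v) \<in> R (insert {w,x} G)" using yv ins by simp
    from reach_split[OF this] have "(w,v) \<in> R (E - {{w,x}})"
    proof (elim disjE conjE)
      assume "(y,v) \<in> R G"
      then have "(y,v) \<in> R (E - {{w,x}})" using reach_mono[of G "E - {{w,x}}"] unfolding G_def by blast
      moreover have "(w,y) \<in> adj (E - {{w,x}})" using xy by (auto simp: doubleton_eq_iff)
      ultimately show ?thesis by (meson converse_rtrancl_into_rtrancl)
    next
      assume "(y,w) \<in> R G"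
      then have "y = w" using isolated[OF iso] reach_sym by blast
      then show ?thesis using xy by simp
    next
      assume "(w,v) \<in> R G"
      then have "v = w" using isolated[OF iso] by blast
      then show ?thesis using vw by simp
    qed
    moreover have Ew': "{e\<in>E. w \<in> e} = {{w,y},{w,x}}" using Ew by auto
    ultimately show False
      using contra surgery[OF t ch w(2) v(2) xy(5) xy(4) xy(1)[symmetric] vw v(1) Ew'] by blast
  qed
qed

theorem lemma8:
  fixes n b :: nat and E :: "nat set set"
  assumes "1 \<le> b" and "real b < real n / 2 - 1"
    and "(E \<in> CT n b \<and> (\<forall>E'\<in>CT n b. M1 n E' \<le> M1 n E))
       \<or> (E \<in> CT n b \<and> (\<forall>E'\<in>CT n b. M2 E' \<le> M2 E))"
  shows "(num_deg n E 2 > 0 \<longrightarrow>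
            int (num_deg n E 1) = 2 * int b + 2 \<and> int (num_deg n E 2) = int n - 3 * int b - 2
            \<and> num_deg n E 3 = 0 \<and> num_deg n E 4 = b)
       \<and> (num_deg n E 2 = 0 \<longleftrightarrow>
            int (num_deg n E 1) = int n - int b \<and> int (num_deg n E 3) = 3 * int b - int n + 2
            \<and> int (num_deg n E 4) = int n - 2 * int b - 2)"
proof -
  have ECT: "E \<in> CT n b" using assms(3) by blast
  then have t: "is_tree n E" and ch: "chemical n E" and nb: "num_branching n E = b"
    by (auto simp: CT_def)
  have hmax: "(\<forall>E'\<in>CT n (num_branching n E). M1 n E' \<le> M1 n E) \<or> (\<forall>E'\<in>CT n (num_branching n E). M2 E' \<le> M2 E)"
    using assms(3) nb by blast
  have "real (2*b+2) < real n" using assms(2) by simp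
  then have nb2: "2*b+2 < n" by linarith
  have g: "is_graph n E" and cE: "card E = n - 1" using t by (auto simp: is_tree_def)
  have degs: "\<forall>v<n. 1 \<le> deg E v \<and> deg E v \<le> 4"
    using deg_pos[OF t] nb2 ch by (auto simp: chemical_def)
  note cnt = counting[OF degs]
  have hs: "(\<Sum>v<n. deg E v) = 2 * (n - 1)" using handshake[OF g] cE by simp
  define n1 where "n1 = num_deg n E 1"
  define n2 where "n2 = num_deg n E 2"
  define n3 where "n3 = num_deg n E 3"
  define n4 where "n4 = num_deg n E 4"
  have e1: "int n = int n1 + int n2 + int n3 + int n4" using cnt(1) unfolding n1_def n2_def n3_def n4_def by simp
  have e2: "int n1 + 2 * int n2 + 3 * int n3 + 4 * int n4 = 2 * int n - 2"
    using cnt(2) hs nb2 unfolding n1_def n2_def n3_def n4_def by simp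
  have e3: "int b = int n3 + int n4" using cnt(3) nb unfolding n3_def n4_def by simp
  have key: "n2 > 0 \<Longrightarrow> n3 = 0"
  proof (rule ccontr)
    assume "n2 > 0" "n3 \<noteq> 0"
    then have "{v. v < n \<and> deg E v = 2} \<noteq> {}" "{v. v < n \<and> deg E v = 3} \<noteq> {}"
      unfolding n2_def n3_def num_deg_def by (metis card.empty less_irrefl)+
    then obtain w v where "w < n" "deg E w = 2" "v < n" "deg E v = 3" by blast
    then show False using no_2_and_3[OF t ch hmax] by blast
  qed
  have P1: "n2 > 0 \<longrightarrow> int n1 = 2 * int b + 2 \<and> int n2 = int n - 3 * int b - 2 \<and> n3 = 0 \<and> n4 = b"
  proof
    assume "n2 > 0"
    then have z: "n3 = 0" using key by blast
    have a1: "int n1 = 2 * int b + 2" using e1 e2 e3 z by linarith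
    have a2: "int n2 = int n - 3 * int b - 2" using e1 e2 e3 z by linarith
    have a3: "int n4 = int b" using e3 z by linarith
    show "int n1 = 2 * int b + 2 \<and> int n2 = int n - 3 * int b - 2 \<and> n3 = 0 \<and> n4 = b"
      using a1 a2 a3 z by simp
  qed
  have P2: "n2 = 0 \<longleftrightarrow> int n1 = int n - int b \<and> int n3 = 3 * int b - int n + 2 \<and> int n4 = int n - 2 * int b - 2"
  proof
    assume z: "n2 = 0"
    have a1: "int n1 = int n - int b" using e1 e2 e3 z by linarith
    have a2: "int n3 = 3 * int b - int n + 2" using e1 e2 e3 z by linarith
    have a3: "int n4 = int n - 2 * int b - 2" using e1 e2 e3 z by linarith
    show "int n1 = int n - int b \<and> int n3 = 3 * int b - int n + 2 \<and> int n4 = int n - 2 * int b - 2"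
      using a1 a2 a3 by (intro conjI)
  next
    assume "int n1 = int n - int b \<and> int n3 = 3 * int b - int n + 2 \<and> int n4 = int n - 2 * int b - 2"
    then have "int n1 = int n - int b" by (rule conjunct1)
    then have "int n2 = 0" using e1 e3 by linarith
    then show "n2 = 0" by simp
  qed
  show ?thesis using P1 P2 unfolding n1_def n2_def n3_def n4_def by (rule conjI)
qed

thm_deps lemma8

end
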